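(* Let $(V,\mathcal H,\iota,W)$ be an abelian functional theory with set of weights $\Omega$. Suppose $\rho_*$ lies in the relative interior of $\mathrm{conv}(\Omega)$, and let $|\Phi\rangle$ be a minimizer of the pure-state constrained search at $\rho_*$, i.e. $\|\Phi\|=1$, $\iota^*(|\Phi\rangle\langle\Phi|)=\rho_*$, and $\langle\Psi|W|\Psi\rangle\ge\langle\Phi|W|\Phi\rangle$ for every normalized $|\Psi\rangle$ with $\iota^*(|\Psi\rangle\langle\Psi|)=\rho_*$. If $|\delta\rangle$ is a weight vector with $\langle\delta|\Phi\rangle=0$, then $\langle\delta|W|\Phi\rangle=0$.
   Context: A generalized functional theory is a tuple $(V,\mathcal H,\iota,W)$ with $V$ a finite-dimensional real vector space, $\mathcal H$ a finite-dimensional complex Hilbert space, $\iota:V\to i\mathfrak u(\mathcal H)$ linear into the Hermitian operators, $W$ Hermitian; it is abelian if all $\iota(v)$ commute. States are linear functionals via the trace and $\iota^*$ is the dual map, $\langle\iota^*(\Gamma),v\rangle=\mathrm{Tr}(\Gamma\iota(v))$. A weight is $\alpha\in V^*$ such that some nonzero $\psi$ satisfies $\iota(v)\psi=\langle\alpha,v\rangle\psi$ for all $v$; such a nonzero $\psi$ is a weight vector. $\Omega$ is the set of weights. *)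

theory Defs
  imports "HOL-Analysis.Analysis"
begin

text \<open>V is a finite-dimensional real vector space 'v::euclidean_space;
  its dual V^* is identified with 'v via the inner product (alpha pairs with v as alpha \<bullet> v).\<close>

definition adj :: "complex^'n^'n \<Rightarrow> complex^'n^'n" where
  "adj A = (\<chi> i j. cnj (A $ j $ i))"

definition hermitian :: "complex^'n^'n \<Rightarrow> bool" where
  "hermitian A \<longleftrightarrow> adj A = A"

definition braket :: "complex^'n \<Rightarrow> complex^'n \<Rightarrow> complex" where
  "braket x y = (\<Sum>i\<in>UNIV. cnj (x $ i) * y $ i)"

definition ketbra :: "complex^'n \<Rightarrow> complex^'n \<Rightarrow> complex^'n^'n" where
  "ketbra x y = (\<chi> i j. x $ i * cnj (y $ j))"

definition gft :: "('v::euclidean_space \<Rightarrow> complex^'n^'n) \<Rightarrow> complex^'n^'n \<Rightarrow> bool" where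
  "gft iota W \<longleftrightarrow> linear iota \<and> (\<forall>v. hermitian (iota v)) \<and> hermitian W"

definition abelian :: "('v::euclidean_space \<Rightarrow> complex^'n^'n) \<Rightarrow> bool" where
  "abelian iota \<longleftrightarrow> (\<forall>u v. iota u ** iota v = iota v ** iota u)"

text \<open>iota_star iota G is the element r of V (= V^*) with r \<bullet> v = Tr(G iota(v)).\<close>
definition iota_star :: "('v::euclidean_space \<Rightarrow> complex^'n^'n) \<Rightarrow> complex^'n^'n \<Rightarrow> 'v" where
  "iota_star iota G = (\<Sum>b\<in>Basis. Re (trace (G ** iota b)) *\<^sub>R b)"

definition weight_vector :: "('v::euclidean_space \<Rightarrow> complex^'n^'n) \<Rightarrow> 'v \<Rightarrow> complex^'n \<Rightarrow> bool" where
  "weight_vector iota alpha psi \<longleftrightarrow> psi \<noteq> 0 \<and>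
     (\<forall>v. iota v *v psi = complex_of_real (alpha \<bullet> v) *s psi)"

definition weights :: "('v::euclidean_space \<Rightarrow> complex^'n^'n) \<Rightarrow> 'v set" where
  "weights iota = {alpha. \<exists>psi. weight_vector iota alpha psi}"

end

theory Submission imports Defs begin

lemma braket_add_right: "braket x (y + z) = braket x y + braket x z"
  by (simp add: braket_def distrib_left sum.distrib)
lemma braket_add_left: "braket (x + y) z = braket x z + braket y z"
  by (simp add: braket_def distrib_right sum.distrib)
lemma braket_scale_right: "braket x (c *s y) = c * braket x y"
  by (simp add: braket_def sum_distrib_left mult_ac)
lemma braket_scale_left: "braket (c *s x) y = cnj c * braket x y"
  by (simp add: braket_def sum_distrib_left mult_ac)
lemma braket_sum_right: "braket x (sum f T) = (\<Sum>i\<in>T. braket x (f i))"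
  by (simp add: braket_def sum_distrib_left sum.swap[of _ T])
lemma braket_sum_left: "braket (sum f T) y = (\<Sum>i\<in>T. braket (f i) y)"
  by (simp add: braket_def sum_distrib_right sum.swap[of _ T])
lemma braket_cnj: "cnj (braket x y) = braket y x"
  by (simp add: braket_def mult_ac)
lemma matvec_sum: "finite T \<Longrightarrow> (A::complex^'n^'n) *v sum f T = (\<Sum>i\<in>T. A *v f i)"
  by (induction T rule: finite_induct) (auto simp: matrix_vector_right_distrib)
lemma herm_braket: "hermitian A \<Longrightarrow> braket x (A *v y) = braket (A *v x) y"
proof -
  assume h: "hermitian A"
  then have a: "cnj (A $ j $ i) = A $ i $ j" for i j
    unfolding hermitian_def adj_def by (metis vec_lambda_beta)
  have 1: "braket x (A *v y) = (\<Sum>i\<in>UNIV. \<Sum>j\<in>UNIV. cnj (x$i) * (A$i$j * y$j))"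
    unfolding braket_def matrix_vector_mult_def by (simp only: vec_lambda_beta sum_distrib_left)
  have 2: "braket (A *v x) y = (\<Sum>j\<in>UNIV. \<Sum>i\<in>UNIV. cnj (A$j$i * x$i) * y$j)"
    unfolding braket_def matrix_vector_mult_def by (simp only: vec_lambda_beta cnj_sum sum_distrib_right)
  have 3: "cnj (A$j$i * x$i) * y$j = cnj (x$i) * (A$i$j * y$j)" for i j
    by (simp only: complex_cnj_mult a mult_ac)
  show ?thesis unfolding 1 2 3 by (rule sum.swap)
qed
lemma braket_self: "braket x x = complex_of_real ((norm x)^2)"
proof -
  have "braket x x = (\<Sum>i\<in>UNIV. complex_of_real ((norm (x$i))^2))"
    unfolding braket_def by (intro sum.cong refl) (metis complex_norm_square of_real_power mult.commute)
  also have "\<dots> = complex_of_real (\<Sum>i\<in>UNIV. (norm (x$i))^2)" by simp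
  also have "(\<Sum>i\<in>UNIV. (norm (x$i))^2) = (norm x)^2"
    unfolding norm_vec_def L2_set_def by (simp add: sum_nonneg)
  finally show ?thesis .
qed
lemma trace_ketbra: "trace (ketbra x x ** A) = braket x (A *v x)"
proof -
  have 1: "trace (ketbra x x ** A) = (\<Sum>i\<in>UNIV. \<Sum>k\<in>UNIV. x$i * cnj (x$k) * A$k$i)"
    unfolding trace_def ketbra_def matrix_matrix_mult_def by (simp only: vec_lambda_beta)
  have 2: "braket x (A *v x) = (\<Sum>k\<in>UNIV. \<Sum>i\<in>UNIV. cnj (x$k) * (A$k$i * x$i))"
    unfolding braket_def matrix_vector_mult_def by (simp only: vec_lambda_beta sum_distrib_left)
  have 3: "x$i * cnj (x$k) * A$k$i = cnj (x$k) * (A$k$i * x$i)" for i k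
    by (simp only: mult_ac)
  show ?thesis unfolding 1 2 3 by (rule sum.swap)
qed
lemma herm_mat1: "hermitian (mat 1 :: complex^'n^'n)"
  unfolding hermitian_def adj_def mat_def by (simp add: vec_eq_iff)
lemma ofreal_s: "complex_of_real r *s x = r *\<^sub>R x"
  unfolding vector_scalar_mult_def scaleR_vec_def by (simp add: vec_eq_iff scaleR_conv_of_real)

lemma expand:
  assumes "hermitian A"
  shows "Re (braket (complex_of_real a *s x + complex_of_real b *s y) (A *v (complex_of_real a *s x + complex_of_real b *s y)))
     = a^2 * Re (braket x (A *v x)) + b^2 * Re (braket y (A *v y)) + 2*a*b * Re (braket x (A *v y))"
proof -
  have c: "braket y (A *v x) = cnj (braket x (A *v y))"
    using herm_braket[OF assms, of y x] braket_cnj[of x "A *v y"] by simp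
  show ?thesis
    by (simp add: matrix_vector_right_distrib vector_scalar_commute braket_add_left braket_add_right
        braket_scale_left braket_scale_right c power2_eq_square algebra_simps)
qed

lemma wv_orth:
  assumes h: "\<forall>v. hermitian (iota v)" and x: "weight_vector iota beta x"
    and y: "weight_vector iota gamma y" and ne: "beta \<noteq> gamma"
  shows "braket x y = 0"
proof -
  define v where "v = gamma - beta"
  have 1: "braket x (iota v *v y) = complex_of_real (gamma \<bullet> v) * braket x y"
    using y unfolding weight_vector_def by (simp add: braket_scale_right)
  have 2: "braket (iota v *v x) y = complex_of_real (beta \<bullet> v) * braket x y"
    using x unfolding weight_vector_def by (simp add: braket_scale_left)
  have 3: "braket x (iota v *v y) = braket (iota v *v x) y" using h herm_braket by blast
  have "complex_of_real (gamma \<bullet> v) * braket x y = complex_of_real (beta \<bullet> v) * braket x y"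
    using 1 2 3 by metis
  then have "braket x y = 0 \<or> gamma \<bullet> v = beta \<bullet> v"
    by auto
  moreover have "gamma \<bullet> v - beta \<bullet> v \<noteq> 0" using ne unfolding v_def by (simp add: inner_diff_left[symmetric])
  ultimately show ?thesis by auto
qed

lemma wv_normalize:
  assumes "weight_vector iota beta x"
  shows "weight_vector iota beta (complex_of_real (1 / norm x) *s x) \<and> norm (complex_of_real (1 / norm x) *s x) = 1"
proof -
  have x0: "x \<noteq> 0" using assms unfolding weight_vector_def by simp
  have "iota v *v (complex_of_real (1 / norm x) *s x) = complex_of_real (beta \<bullet> v) *s (complex_of_real (1 / norm x) *s x)" for v
    using assms unfolding weight_vector_def
    by (simp add: vector_scalar_commute vector_smult_assoc mult.commute)
  moreover have "complex_of_real (1 / norm x) *s x \<noteq> 0"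
    using x0 unfolding ofreal_s[of "1 / norm x"] by simp
  moreover have "norm (complex_of_real (1 / norm x) *s x) = 1"
    using x0 unfolding ofreal_s[of "1 / norm x"] by simp
  ultimately show ?thesis unfolding weight_vector_def by blast
qed

lemma phase:
  assumes r: "r \<ge> 0"
  shows "\<exists>c. cmod c = r \<and> Re (c * z) = 0 \<and> Re (c * Y) \<le> 0 \<and> (z = 0 \<and> r > 0 \<and> Y \<noteq> 0 \<longrightarrow> Re (c * Y) < 0)"
proof (cases "z = 0")
  case True
  show ?thesis
  proof (cases "Y = 0")
    case True
    then show ?thesis using r \<open>z = 0\<close> by (intro exI[of _ "complex_of_real r"]) simp
  next
    case False
    define c where "c = - complex_of_real r * cnj Y / complex_of_real (cmod Y)"
    have cm: "cmod c = r" using False r unfolding c_def by (simp add: norm_divide norm_mult)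
    have "c * Y = - complex_of_real (r * cmod Y)"
      unfolding c_def using False
      by (simp add: field_simps complex_norm_square[symmetric] power2_eq_square)
    then have "Re (c * Y) = - r * cmod Y" by simp
    then show ?thesis using cm True False r
      by (intro exI[of _ c]) (auto simp: mult_le_0_iff intro!: mult_pos_pos)
  qed
next
  case False
  define c0 where "c0 = \<i> * cnj z / complex_of_real (cmod z)"
  have cm: "cmod c0 = 1" using False unfolding c0_def by (simp add: norm_divide norm_mult)
  have "c0 * z = \<i> * complex_of_real (cmod z)"
    unfolding c0_def using False
    by (simp add: field_simps complex_norm_square[symmetric] power2_eq_square)
  then have rz: "Re (c0 * z) = 0" by simp
  show ?thesis
  proof (cases "Re (c0 * Y) \<le> 0")
    case True
    then show ?thesis using cm rz r False
      by (intro exI[of _ "complex_of_real r * c0"]) (simp add: norm_mult mult.assoc mult_nonneg_nonpos)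
  next
    case f2: False
    then show ?thesis using cm rz r False
      by (intro exI[of _ "- complex_of_real r * c0"]) (simp add: norm_mult mult.assoc)
  qed
qed

lemma eta_lemma:
  fixes A :: "complex^'n^'n"
  assumes T: "finite T"
    and ev: "\<forall>b\<in>T. A *v w b = complex_of_real (f b) *s w b"
    and on: "\<forall>b\<in>T. \<forall>g\<in>T. braket (w b) (w g) = (if b = g then 1 else 0)"
  shows "braket (\<Sum>b\<in>T. c b *s w b) (A *v (\<Sum>b\<in>T. c b *s w b)) = (\<Sum>b\<in>T. complex_of_real ((cmod (c b))^2 * f b))"
    and "braket x (A *v (\<Sum>b\<in>T. c b *s w b)) = (\<Sum>b\<in>T. c b * complex_of_real (f b) * braket x (w b))"
proof -
  have Av: "A *v (\<Sum>b\<in>T. c b *s w b) = (\<Sum>b\<in>T. (c b * complex_of_real (f b)) *s w b)"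
    using ev by (simp add: matvec_sum[OF T] vector_scalar_commute vector_smult_assoc mult.commute cong: sum.cong)
  show "braket x (A *v (\<Sum>b\<in>T. c b *s w b)) = (\<Sum>b\<in>T. c b * complex_of_real (f b) * braket x (w b))"
    unfolding Av by (simp add: braket_sum_right braket_scale_right)
  have "braket (\<Sum>b\<in>T. c b *s w b) (A *v (\<Sum>b\<in>T. c b *s w b))
      = (\<Sum>g\<in>T. c g * complex_of_real (f g) * (\<Sum>b\<in>T. cnj (c b) * braket (w b) (w g)))"
    unfolding Av by (simp add: braket_sum_right braket_sum_left braket_scale_right braket_scale_left)
  also have "\<dots> = (\<Sum>g\<in>T. c g * complex_of_real (f g) * cnj (c g))"
  proof (rule sum.cong[OF refl])
    fix g assume g: "g \<in> T"
    have "(\<Sum>b\<in>T. cnj (c b) * braket (w b) (w g)) = (\<Sum>b\<in>T. if b = g then cnj (c b) else 0)"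
      using on g by (intro sum.cong refl) auto
    also have "\<dots> = cnj (c g)" using T g by simp
    finally show "c g * complex_of_real (f g) * (\<Sum>b\<in>T. cnj (c b) * braket (w b) (w g)) = c g * complex_of_real (f g) * cnj (c g)" by simp
  qed
  also have "\<dots> = (\<Sum>b\<in>T. complex_of_real ((cmod (c b))^2 * f b))"
    by (intro sum.cong refl) (metis (no_types) complex_norm_square of_real_mult mult.commute mult.left_commute)
  finally show "braket (\<Sum>b\<in>T. c b *s w b) (A *v (\<Sum>b\<in>T. c b *s w b)) = (\<Sum>b\<in>T. complex_of_real ((cmod (c b))^2 * f b))" .
qed

lemma choose_ab:
  fixes E F cc :: real
  assumes "cc < 0"
  shows "\<exists>a b. a^2 + b^2 = 1 \<and> a^2 * E + b^2 * F + 2 * a * b * cc < E"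
proof -
  define D where "D = \<bar>F - E\<bar>"
  define b where "b = min (1/2) (- cc / (2 * (D + 1)))"
  define a where "a = sqrt (1 - b^2)"
  have D0: "D \<ge> 0" unfolding D_def by simp
  have "- cc / (2 * (D + 1)) > 0" using assms D0 by (intro divide_pos_pos) auto
  then have b0: "b > 0" unfolding b_def by simp
  have b1: "b \<le> 1/2" unfolding b_def by (rule min.cobounded1)
  have bD: "b * D \<le> - cc / 2"
  proof -
    have "b * D \<le> (- cc / (2 * (D + 1))) * D" using D0 unfolding b_def by (intro mult_right_mono) auto
    also have "\<dots> \<le> - cc / 2" using D0 assms by (simp add: field_simps)
    finally show ?thesis .
  qed
  have "b^2 \<le> (1/2)^2" using b0 b1 by (intro power_mono) auto
  then have bsq: "b^2 \<le> 1/4" by (simp add: power2_eq_square)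
  have a2: "a^2 = 1 - b^2" unfolding a_def using bsq by simp
  have ah: "a \<ge> 1/2" unfolding a_def using bsq by (intro real_le_rsqrt) (simp add: power2_eq_square)
  have "b^2 * (F - E) \<le> b^2 * D" unfolding D_def by (intro mult_left_mono) auto
  also have "\<dots> = b * (b * D)" by (simp add: power2_eq_square)
  also have "\<dots> \<le> b * (- cc / 2)" using bD b0 by (intro mult_left_mono) auto
  finally have t1: "b^2 * (F - E) \<le> b * (- cc / 2)" .
  have t2: "2 * a * b * cc \<le> b * cc"
  proof -
    have "(2 * a) * (b * cc) \<le> 1 * (b * cc)"
      using ah b0 assms by (intro mult_right_mono_neg) (auto simp: mult_pos_neg less_imp_le)
    then show ?thesis by (simp add: mult_ac)
  qed
  have "a^2 * E + b^2 * F + 2 * a * b * cc = E + b^2 * (F - E) + 2 * a * b * cc"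
    unfolding a2 by (simp add: algebra_simps)
  also have "\<dots> \<le> E + b * (- cc / 2) + b * cc" using t1 t2 by simp
  also have "\<dots> < E" using b0 assms by (simp add: algebra_simps mult_pos_neg)
  finally show ?thesis using a2 by (intro exI[of _ a] exI[of _ b]) simp
qed


theorem lemma4p22:
  fixes iota :: "'v::euclidean_space \<Rightarrow> complex^'n^'n"
    and W :: "complex^'n^'n" and rho :: 'v and Phi delta :: "complex^'n"
  assumes "gft iota W"
    and "abelian iota"
    and "rho \<in> rel_interior (convex hull (weights iota))"
    and "norm Phi = 1"
    and "iota_star iota (ketbra Phi Phi) = rho"
    and "\<And>Psi. norm Psi = 1 \<Longrightarrow> iota_star iota (ketbra Psi Psi) = rho \<Longrightarrow>
           Re (braket Psi (W *v Psi)) \<ge> Re (braket Phi (W *v Phi))"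
    and "\<exists>alpha. weight_vector iota alpha delta"
    and "braket delta Phi = 0"
  shows "braket delta (W *v Phi) = 0"
proof (rule ccontr)
  assume X: "braket delta (W *v Phi) \<noteq> 0"
  have hi: "\<forall>v. hermitian (iota v)" and hW: "hermitian W"
    using assms(1) unfolding gft_def by auto
  obtain a0 where wd: "weight_vector iota a0 delta" using assms(7) by blast
  have a0O: "a0 \<in> weights iota" using wd unfolding weights_def by blast
  have cvx: "convex (convex hull (weights iota))" by (rule convex_convex_hull)
  have ne: "convex hull (weights iota) \<noteq> {}" using a0O by auto
  have a0h: "a0 \<in> convex hull (weights iota)" using a0O by (rule hull_inc)
  obtain e where e1: "e > 1" and eh: "(1 - e) *\<^sub>R a0 + e *\<^sub>R rho \<in> convex hull (weights iota)"
    using convex_rel_interior_iff[OF cvx ne] assms(3) a0h by blast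
  obtain S u where S: "finite S" "S \<subseteq> weights iota" and u0: "\<forall>x\<in>S. 0 \<le> u x"
    and su: "sum u S = 1" and suv: "(\<Sum>v\<in>S. u v *\<^sub>R v) = (1 - e) *\<^sub>R a0 + e *\<^sub>R rho"
    using eh unfolding convex_hull_explicit by blast
  define T where "T = insert a0 S"
  have T: "finite T" unfolding T_def using S by simp
  have TO: "T \<subseteq> weights iota" unfolding T_def using S a0O by simp
  have a0T: "a0 \<in> T" unfolding T_def by simp
  define q where "q b = ((if b \<in> S then u b else 0) + (if b = a0 then e - 1 else 0)) / e" for b
  have q0: "q b \<ge> 0" for b unfolding q_def using u0 e1 by (auto intro!: divide_nonneg_pos)
  have qa0: "q a0 > 0" unfolding q_def using u0 e1 by (auto intro!: divide_pos_pos add_nonneg_pos)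
  have sS: "(\<Sum>b\<in>T. (if b \<in> S then g b else 0)) = sum g S" for g :: "'v \<Rightarrow> 'c::comm_monoid_add"
  proof -
    have "T \<inter> S = S" unfolding T_def by auto
    then show ?thesis unfolding sum.inter_restrict[OF T, symmetric] by (simp only:)
  qed
  have sumq: "sum q T = 1"
  proof -
    have "sum q T = ((\<Sum>b\<in>T. (if b \<in> S then u b else 0)) + (\<Sum>b\<in>T. (if b = a0 then e - 1 else 0))) / e"
      unfolding q_def by (simp only: add_divide_distrib sum.distrib sum_divide_distrib)
    also have "\<dots> = (1 + (e - 1)) / e" unfolding sS[of u] su sum.delta[OF T] using a0T by simp
    finally show ?thesis using e1 by simp
  qed
  have sumqv: "(\<Sum>b\<in>T. q b *\<^sub>R b) = rho"
  proof -
    have per: "q b *\<^sub>R b = (1 / e) *\<^sub>R ((if b \<in> S then u b *\<^sub>R b else 0) + (if b = a0 then (e - 1) *\<^sub>R b else 0))" for b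
      unfolding q_def by (cases "b \<in> S"; cases "b = a0") (simp_all add: divide_inverse scaleR_add_left scaleR_add_right ring_distribs mult.commute)
    have "(\<Sum>b\<in>T. q b *\<^sub>R b) = (1 / e) *\<^sub>R ((\<Sum>b\<in>T. (if b \<in> S then u b *\<^sub>R b else 0)) + (\<Sum>b\<in>T. (if b = a0 then (e - 1) *\<^sub>R b else 0)))"
      unfolding per by (simp only: scaleR_right_distrib sum.distrib scaleR_sum_right)
    also have "\<dots> = (1 / e) *\<^sub>R ((1 - e) *\<^sub>R a0 + e *\<^sub>R rho + (e - 1) *\<^sub>R a0)"
      unfolding sS[of "\<lambda>b. u b *\<^sub>R b"] suv sum.delta[OF T] using a0T by simp
    also have "\<dots> = rho" using e1 by (simp add: algebra_simps)
    finally show ?thesis .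
  qed
  define nz :: "complex^'n \<Rightarrow> complex^'n" where "nz x = complex_of_real (1 / norm x) *s x" for x
  define w where "w b = (if b = a0 then nz delta else nz (SOME x. weight_vector iota b x))" for b
  have wp: "weight_vector iota b (w b) \<and> norm (w b) = 1" if "b \<in> T" for b
  proof (cases "b = a0")
    case True
    then show ?thesis unfolding w_def nz_def using wv_normalize[OF wd] by simp
  next
    case False
    then have "b \<in> weights iota" using that TO by auto
    then have "\<exists>x. weight_vector iota b x" unfolding weights_def by blast
    then have "weight_vector iota b (SOME x. weight_vector iota b x)" by (rule someI_ex)
    then show ?thesis unfolding w_def nz_def using False wv_normalize by simp
  qed
  have on: "\<forall>b\<in>T. \<forall>g\<in>T. braket (w b) (w g) = (if b = g then 1 else 0)"
  proof (intro ballI)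
    fix b g assume b: "b \<in> T" and g: "g \<in> T"
    show "braket (w b) (w g) = (if b = g then 1 else 0)"
    proof (cases "b = g")
      case True then show ?thesis using wp[OF b] by (simp add: braket_self)
    next
      case False then show ?thesis using wv_orth[OF hi, of b "w b" g "w g"] wp b g by simp
    qed
  qed
  define z where "z b = braket Phi (w b)" for b
  define Y where "Y b = braket Phi (W *v w b)" for b
  have "\<forall>b. \<exists>c. cmod c = sqrt (q b) \<and> Re (c * z b) = 0 \<and> Re (c * Y b) \<le> 0 \<and>
      (z b = 0 \<and> sqrt (q b) > 0 \<and> Y b \<noteq> 0 \<longrightarrow> Re (c * Y b) < 0)"
    by (intro allI phase real_sqrt_ge_zero q0)
  then obtain c where c0: "\<forall>b. cmod (c b) = sqrt (q b) \<and> Re (c b * z b) = 0 \<and> Re (c b * Y b) \<le> 0 \<and>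
      (z b = 0 \<and> sqrt (q b) > 0 \<and> Y b \<noteq> 0 \<longrightarrow> Re (c b * Y b) < 0)"
    by (rule choice[THEN exE])
  note c = spec[OF c0]
  have nd: "norm delta \<noteq> 0" using wd unfolding weight_vector_def by simp
  have za0: "z a0 = 0"
    unfolding z_def w_def nz_def using assms(8) braket_cnj[of delta Phi]
    by (simp add: braket_scale_right)
  have Ya0: "Y a0 \<noteq> 0"
  proof -
    have "braket Phi (W *v delta) = cnj (braket delta (W *v Phi))"
      using herm_braket[OF hW, of Phi delta] braket_cnj[of "W *v Phi" delta] by (metis complex_cnj_cnj)
    then have "braket Phi (W *v delta) \<noteq> 0" using X by simp
    moreover have wa0: "w a0 = complex_of_real (1 / norm delta) *s delta" unfolding w_def nz_def by simp
    moreover have "Y a0 = complex_of_real (1 / norm delta) * braket Phi (W *v delta)"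
      unfolding Y_def wa0 by (simp only: vector_scalar_commute braket_scale_right)
    ultimately show ?thesis using nd by simp
  qed
  have "sqrt (q a0) > 0" using qa0 by simp
  then have cYa0: "Re (c a0 * Y a0) < 0" using c[of a0] za0 Ya0 by blast
  have cq: "(cmod (c b))^2 = q b" for b
  proof -
    have "cmod (c b) = sqrt (q b)" using c[of b] by blast
    then show ?thesis using q0[of b] by simp
  qed
  define eta where "eta = (\<Sum>b\<in>T. c b *s w b)"
  have ev1: "\<forall>b\<in>T. mat 1 *v w b = complex_of_real 1 *s w b" by simp
  have n1: "braket eta (mat 1 *v eta) = (\<Sum>b\<in>T. complex_of_real ((cmod (c b))^2 * 1))"
    unfolding eta_def by (rule eta_lemma(1)[OF T ev1 on])
  have Reeta: "Re (braket eta (mat 1 *v eta)) = 1" unfolding n1 using sumq by (simp add: cq)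
  have n2: "braket Phi (mat 1 *v eta) = (\<Sum>b\<in>T. c b * complex_of_real 1 * braket Phi (w b))"
    unfolding eta_def by (rule eta_lemma(2)[OF T ev1 on])
  have RePeta: "Re (braket Phi (mat 1 *v eta)) = 0" unfolding n2 using c by (simp add: z_def)
  have evi: "\<forall>b\<in>T. iota v *v w b = complex_of_real (b \<bullet> v) *s w b" for v
    using wp unfolding weight_vector_def by blast
  have i1: "Re (braket eta (iota v *v eta)) = rho \<bullet> v" for v
  proof -
    have "braket eta (iota v *v eta) = (\<Sum>b\<in>T. complex_of_real ((cmod (c b))^2 * (b \<bullet> v)))"
      unfolding eta_def by (rule eta_lemma(1)[OF T evi on])
    then have "Re (braket eta (iota v *v eta)) = (\<Sum>b\<in>T. q b * (b \<bullet> v))" by (simp add: cq)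
    also have "\<dots> = rho \<bullet> v" unfolding sumqv[symmetric] by (simp add: inner_sum_left)
    finally show ?thesis .
  qed
  have i2: "Re (braket Phi (iota v *v eta)) = 0" for v
  proof -
    have "braket Phi (iota v *v eta) = (\<Sum>b\<in>T. c b * complex_of_real (b \<bullet> v) * braket Phi (w b))"
      unfolding eta_def by (rule eta_lemma(2)[OF T evi on])
    then have "Re (braket Phi (iota v *v eta)) = (\<Sum>b\<in>T. Re (c b * complex_of_real (b \<bullet> v) * braket Phi (w b)))"
      by (simp only: Re_sum)
    also have "\<dots> = (\<Sum>b\<in>T. (b \<bullet> v) * Re (c b * z b))"
      by (intro sum.cong refl) (simp add: z_def algebra_simps)
    also have "\<dots> = 0" using c by simp
    finally show ?thesis .
  qed
  have rb: "rho \<bullet> b = Re (braket Phi (iota b *v Phi))" if "b \<in> Basis" for b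
  proof -
    have "rho \<bullet> b = (\<Sum>b'\<in>Basis. Re (trace (ketbra Phi Phi ** iota b')) * (b' \<bullet> b))"
      unfolding assms(5)[symmetric] iota_star_def by (simp add: inner_sum_left)
    also have "\<dots> = Re (trace (ketbra Phi Phi ** iota b))"
      using that by (simp add: inner_Basis if_distrib cong: if_cong)
    finally show ?thesis by (simp add: trace_ketbra)
  qed
  have WY: "braket Phi (W *v eta) = (\<Sum>b\<in>T. c b * Y b)"
    unfolding eta_def Y_def
    by (simp add: matvec_sum[OF T] vector_scalar_commute braket_sum_right braket_scale_right)
  have cc: "Re (braket Phi (W *v eta)) < 0"
  proof -
    have "Re (braket Phi (W *v eta)) = Re (c a0 * Y a0) + (\<Sum>b\<in>T - {a0}. Re (c b * Y b))"
      unfolding WY Re_sum using sum.remove[OF T a0T] by simp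
    moreover have "(\<Sum>b\<in>T - {a0}. Re (c b * Y b)) \<le> 0" using c by (intro sum_nonpos) simp
    ultimately show ?thesis using cYa0 by simp
  qed
  obtain a b where ab: "a^2 + b^2 = 1"
    and lt: "a^2 * Re (braket Phi (W *v Phi)) + b^2 * Re (braket eta (W *v eta)) + 2 * a * b * Re (braket Phi (W *v eta)) < Re (braket Phi (W *v Phi))"
    using choose_ab[OF cc] by blast
  define Psi where "Psi = complex_of_real a *s Phi + complex_of_real b *s eta"
  have "(norm Psi)^2 = Re (braket Psi (mat 1 *v Psi))" by (simp add: braket_self)
  also have "\<dots> = a^2 * Re (braket Phi (mat 1 *v Phi)) + b^2 * 1 + 2 * a * b * 0"
    unfolding Psi_def expand[OF herm_mat1] Reeta RePeta by simp
  also have "\<dots> = 1" using assms(4) ab by (simp add: braket_self)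
  finally have nPsi: "norm Psi = 1" using norm_ge_zero[of Psi] by (simp add: power2_eq_1_iff)
  have "iota_star iota (ketbra Psi Psi) = (\<Sum>bb\<in>Basis. (rho \<bullet> bb) *\<^sub>R bb)"
    unfolding iota_star_def
  proof (intro sum.cong refl)
    fix bb :: 'v assume bb: "bb \<in> Basis"
    have "Re (trace (ketbra Psi Psi ** iota bb)) = a^2 * Re (braket Phi (iota bb *v Phi)) + b^2 * Re (braket eta (iota bb *v eta)) + 2 * a * b * Re (braket Phi (iota bb *v eta))"
      unfolding trace_ketbra Psi_def by (rule expand) (use hi in blast)
    also have "\<dots> = rho \<bullet> bb" using i1 i2 rb[OF bb] ab by (simp add: algebra_simps flip: distrib_right)
    finally show "Re (trace (ketbra Psi Psi ** iota bb)) *\<^sub>R bb = (rho \<bullet> bb) *\<^sub>R bb" by simp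
  qed
  also have "\<dots> = rho" by (rule euclidean_representation)
  finally have cPsi: "iota_star iota (ketbra Psi Psi) = rho" .
  have "Re (braket Psi (W *v Psi)) < Re (braket Phi (W *v Phi))"
    unfolding Psi_def expand[OF hW] using lt .
  with assms(6)[OF nPsi cPsi] show False by simp
qed

end
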